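(* Let $\gamma\ge1$ and let $\alpha,\beta$ be positive constants with $-1<\alpha\le\beta$. Then $$\alpha^2\le\frac{\mathcal{Q}\big((\alpha+1)^{2/\gamma}\big)}{\zeta(\beta,\gamma)},$$ where $\mathcal{Q}(h)=\frac1\gamma\int_1^h(s^{\gamma-2}-s^{-2})\,ds$ and $\zeta(\beta,\gamma)=\frac{1}{\gamma^2}\big\{(\beta+1)^{-\frac2\gamma}+(\beta+1)^{-\frac2\gamma-1}\big\}$. *)

theory Defs
  imports "HOL-Analysis.Analysis"
begin

definition calQ :: "real \<Rightarrow> real \<Rightarrow> real" where
  "calQ \<gamma> h = (1 / \<gamma>) * (LBINT s=1..h. s powr (\<gamma> - 2) - s powr (-2))"

definition zeta :: "real \<Rightarrow> real \<Rightarrow> real" where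
  "zeta \<beta> \<gamma> = (1 / \<gamma>\<^sup>2) * ((\<beta> + 1) powr (- 2 / \<gamma>) + (\<beta> + 1) powr (- 2 / \<gamma> - 1))"

end

theory Submission
  imports Defs
begin

lemma keyA:
  fixes F :: "real \<Rightarrow> real" and \<gamma> a :: real
  assumes g: "\<gamma> \<ge> 1" and a: "a \<ge> 1"
    and F: "\<And>s. s > 0 \<Longrightarrow> (F has_real_derivative (s powr (\<gamma> - 2) - s powr (-2))) (at s)"
  shows "(a - 1)^2 * (a powr (- 2 / \<gamma>) + a powr (- 2 / \<gamma> - 1)) / \<gamma>^2
         \<le> (1 / \<gamma>) * (F (a powr (2 / \<gamma>)) - F 1)"
proof -
  define p where "p = 2 / \<gamma>"
  have p0: "p > 0" using g by (simp add: p_def)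
  have pg: "p * \<gamma> = 2" using g by (simp add: p_def)
  define H where "H t = (1 / \<gamma>) * (F (t powr p) - F 1)
       - (t - 1)^2 * (t powr (- p) + t powr (- p - 1)) / \<gamma>^2" for t
  define D where "D t = (1 / \<gamma>) * (((t powr p) powr (\<gamma> - 2) - (t powr p) powr (-2)) * (p * t powr (p - 1)))
       - (2 * (t - 1) * (t powr (- p) + t powr (- p - 1))
          + ((- p) * t powr (- p - 1) + (- p - 1) * t powr (- p - 1 - 1)) * (t - 1)^2) / \<gamma>^2" for t
  have deriv: "(H has_real_derivative D t) (at t)" if t: "t > 0" for t
  proof -
    have d1: "((\<lambda>t. t powr p) has_real_derivative p * t powr (p - 1)) (at t)"
      using t by (rule has_real_derivative_powr)
    have d2: "((\<lambda>t. F (t powr p)) has_real_derivative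
        ((t powr p) powr (\<gamma> - 2) - (t powr p) powr (-2)) * (p * t powr (p - 1))) (at t)"
      by (rule DERIV_chain2[OF F d1]) (use t in simp)
    have d3: "((\<lambda>t. t powr (- p)) has_real_derivative (- p) * t powr (- p - 1)) (at t)"
      using t by (rule has_real_derivative_powr)
    have d4: "((\<lambda>t. t powr (- p - 1)) has_real_derivative (- p - 1) * t powr (- p - 1 - 1)) (at t)"
      using t by (rule has_real_derivative_powr)
    have d5: "((\<lambda>t. (t - 1)^2) has_real_derivative 2 * (t - 1)) (at t)"
      by (auto intro!: derivative_eq_intros)
    have d6: "((\<lambda>t. (t - 1)^2 * (t powr (- p) + t powr (- p - 1))) has_real_derivative
        2 * (t - 1) * (t powr (- p) + t powr (- p - 1))
          + ((- p) * t powr (- p - 1) + (- p - 1) * t powr (- p - 1 - 1)) * (t - 1)^2) (at t)"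
      by (rule DERIV_mult[OF d5 DERIV_add[OF d3 d4]])
    note d7 = DERIV_diff[OF DERIV_cmult[OF DERIV_diff[OF d2 DERIV_const]] DERIV_cdivide[OF d6], of "1/\<gamma>" "F 1" "\<gamma>^2"]
    show ?thesis
      unfolding H_def D_def using d7 by simp
  qed
  have Dnn: "D t \<ge> 0" if t: "t \<ge> 1" for t
  proof -
    have t0: "t > 0" using t by simp
    define u where "u = t powr (- p - 2)"
    have u0: "u > 0" using t0 by (simp add: u_def)
    have e0: "t powr (c + (- p - 2)) = t ^ n * u" if "c = real n" for c n
      using t0 that by (simp add: u_def powr_add powr_realpow)
    have e: "t powr x = t ^ n * u" if "x = real n + (- p - 2)" for x n
      using e0[of "real n" n] that by simp
    have e1: "(t powr p) powr (\<gamma> - 2) * t powr (p - 1) = t^3 * u"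
    proof -
      have "(t powr p) powr (\<gamma> - 2) * t powr (p - 1) = t powr (3 + (- p - 2))"
        using t0 pg by (simp add: powr_powr powr_add[symmetric] algebra_simps)
      then show ?thesis using e[of "3 + (- p - 2)" 3] by simp
    qed
    have e2: "(t powr p) powr (- 2) * t powr (p - 1) = t * u"
    proof -
      have "(t powr p) powr (- 2) * t powr (p - 1) = t powr (1 + (- p - 2))"
        using t0 by (simp add: powr_powr powr_add[symmetric] algebra_simps)
      then show ?thesis using e[of "1 + (- p - 2)" 1] by simp
    qed
    have e3: "t powr (- p) = t^2 * u" by (rule e[of _ 2]) simp
    have e4: "t powr (- p - 1) = t * u" using e[of "- p - 1" 1] by simp
    have e5: "t powr (- p - 1 - 1) = u" using e[of "- p - 1 - 1" 0] by simp
    have m: "((t powr p) powr (\<gamma> - 2) - (t powr p) powr (-2)) * (p * t powr (p - 1))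
        = p * ((t powr p) powr (\<gamma> - 2) * t powr (p - 1) - (t powr p) powr (-2) * t powr (p - 1))"
      by (simp only: algebra_simps)
    have cp: "(1 / \<gamma>) * p = 2 / \<gamma>^2" using g by (simp add: p_def power2_eq_square)
    have "D t = ((1 / \<gamma>) * p) * (t^3 * u - t * u)
       - (2 * (t - 1) * (t^2 * u + t * u)
          + ((- p) * (t * u) + (- p - 1) * u) * (t - 1)^2) / \<gamma>^2"
      unfolding D_def m e1 e2 e3 e4 e5 by (simp only: mult.assoc)
    also have "\<dots> = (2 * (t^3 * u - t * u)
       - (2 * (t - 1) * (t^2 * u + t * u)
          + ((- p) * (t * u) + (- p - 1) * u) * (t - 1)^2)) / \<gamma>^2"
      unfolding cp by (simp add: diff_divide_distrib)
    also have "\<dots> = (t - 1)^2 * u * (p * t + p + 1) / \<gamma>^2"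
      by (rule arg_cong[where f="\<lambda>x. x / \<gamma>^2"]) (simp add: power2_eq_square power3_eq_cube algebra_simps)
    finally have "D t = (t - 1)^2 * u * (p * t + p + 1) / \<gamma>^2" .
    then show ?thesis using u0 p0 t0 by simp
  qed
  have "H 1 \<le> H a"
  proof (rule DERIV_nonneg_imp_nondecreasing[OF a])
    fix x :: real assume x: "1 \<le> x" "x \<le> a"
    show "\<exists>y. DERIV H x :> y \<and> y \<ge> 0"
      using deriv[of x] Dnn[of x] x by auto
  qed
  then show ?thesis unfolding H_def p_def by simp
qed

lemma antideriv:
  fixes \<gamma> :: real
  assumes g: "\<gamma> \<ge> 1"
  shows "\<exists>F. \<forall>s>0. (F has_real_derivative (s powr (\<gamma> - 2) - s powr (-2))) (at s)"
proof (cases "\<gamma> = 1")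
  case True
  show ?thesis
  proof (rule exI[of _ "\<lambda>s. ln s + 1 / s"], intro allI impI)
    fix s :: real assume s: "s > 0"
    have "((\<lambda>s. ln s + 1 / s) has_real_derivative (1 / s - 1 / s^2)) (at s)"
      using s by (auto intro!: derivative_eq_intros simp: power2_eq_square field_simps)
    moreover have "s powr (\<gamma> - 2) = 1 / s"
      using s True by (simp add: powr_minus_divide)
    moreover have "s powr (-2) = 1 / s^2"
      using s by (simp add: powr_minus_divide powr_numeral)
    ultimately show "((\<lambda>s. ln s + 1 / s) has_real_derivative (s powr (\<gamma> - 2) - s powr (-2))) (at s)"
      by simp
  qed
next
  case False
  then have g1: "\<gamma> - 1 \<noteq> 0" by simp
  show ?thesis
  proof (rule exI[of _ "\<lambda>s. s powr (\<gamma> - 1) / (\<gamma> - 1) + 1 / s"], intro allI impI)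
    fix s :: real assume s: "s > 0"
    have d: "((\<lambda>s. s powr (\<gamma> - 1)) has_real_derivative (\<gamma> - 1) * s powr (\<gamma> - 1 - 1)) (at s)"
      using s by (rule has_real_derivative_powr)
    have "((\<lambda>s. s powr (\<gamma> - 1) / (\<gamma> - 1) + 1 / s) has_real_derivative
           ((\<gamma> - 1) * s powr (\<gamma> - 1 - 1)) / (\<gamma> - 1) - 1 / s^2) (at s)"
      using DERIV_add[OF DERIV_cdivide[OF d, of "\<gamma> - 1"] DERIV_inverse[of s]] s
      by (simp add: divide_inverse power2_eq_square)
    moreover have "((\<gamma> - 1) * s powr (\<gamma> - 1 - 1)) / (\<gamma> - 1) = s powr (\<gamma> - 2)"
      using g1 by simp
    moreover have "s powr (-2) = 1 / s^2"
      using s by (simp add: powr_minus_divide powr_numeral)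
    ultimately show "((\<lambda>s. s powr (\<gamma> - 1) / (\<gamma> - 1) + 1 / s) has_real_derivative (s powr (\<gamma> - 2) - s powr (-2))) (at s)"
      by simp
  qed
qed

theorem propositionB1:
  fixes \<alpha> \<beta> \<gamma> :: real
  assumes "\<gamma> \<ge> 1"
    and "\<alpha> > 0" and "\<beta> > 0"
    and "-1 < \<alpha>" and "\<alpha> \<le> \<beta>"
  shows "\<alpha>\<^sup>2 \<le> calQ \<gamma> ((\<alpha> + 1) powr (2 / \<gamma>)) / zeta \<beta> \<gamma>"
proof -
  obtain F where F: "\<And>s. s > 0 \<Longrightarrow> (F has_real_derivative (s powr (\<gamma> - 2) - s powr (-2))) (at s)"
    using antideriv[OF assms(1)] by blast
  define a where "a = \<alpha> + 1"
  have a1: "a \<ge> 1" using assms by (simp add: a_def)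
  define h where "h = a powr (2 / \<gamma>)"
  have h1: "h \<ge> 1" unfolding h_def using a1 assms(1) by (simp add: ge_one_powr_ge_zero)
  have Q: "calQ \<gamma> h = (1 / \<gamma>) * (F h - F 1)"
  proof -
    have "(LBINT s=ereal 1..ereal h. s powr (\<gamma> - 2) - s powr (-2)) = F h - F 1"
    proof (rule interval_integral_FTC_finite[of 1 h])
      show "continuous_on {min 1 h..max 1 h} (\<lambda>s. s powr (\<gamma> - 2) - s powr (-2))"
        using h1 by (intro continuous_intros) auto
      fix x assume "min 1 h \<le> x" "x \<le> max 1 h"
      then have "x > 0" using h1 by simp
      then show "(F has_vector_derivative x powr (\<gamma> - 2) - x powr (-2)) (at x within {min 1 h..max 1 h})"
        using F by (simp add: has_real_derivative_iff_has_vector_derivative[symmetric] has_field_derivative_at_within)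
    qed
    then show ?thesis by (simp add: calQ_def one_ereal_def)
  qed
  have key: "(a - 1)^2 * (a powr (- 2 / \<gamma>) + a powr (- 2 / \<gamma> - 1)) / \<gamma>^2 \<le> calQ \<gamma> h"
    unfolding Q unfolding h_def by (rule keyA[OF assms(1) a1 F])
  have b1: "\<beta> + 1 \<ge> a" using assms by (simp add: a_def)
  have z1: "(\<beta> + 1) powr (- 2 / \<gamma>) \<le> a powr (- 2 / \<gamma>)"
    using assms a1 b1 by (intro powr_mono2') auto
  have z2: "(\<beta> + 1) powr (- 2 / \<gamma> - 1) \<le> a powr (- 2 / \<gamma> - 1)"
    using assms a1 b1 by (intro powr_mono2') (auto simp: field_simps)
  have zpos: "zeta \<beta> \<gamma> > 0" using assms unfolding zeta_def by (intro mult_pos_pos add_pos_pos) auto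
  have "\<alpha>^2 * zeta \<beta> \<gamma> \<le> \<alpha>^2 * ((a powr (- 2 / \<gamma>) + a powr (- 2 / \<gamma> - 1)) / \<gamma>^2)"
    unfolding zeta_def using z1 z2 assms
    by (intro mult_left_mono) (auto intro!: divide_right_mono simp: divide_inverse[symmetric])
  also have "\<dots> = (a - 1)^2 * (a powr (- 2 / \<gamma>) + a powr (- 2 / \<gamma> - 1)) / \<gamma>^2"
    by (simp add: a_def)
  also have "\<dots> \<le> calQ \<gamma> h" by (rule key)
  finally show ?thesis using zpos by (simp add: pos_le_divide_eq h_def a_def)
qed

end
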